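(* Let $\mathcal{W}$ be the smallest class of digraphs such that: (1) every transitive oriented graph is in $\mathcal{W}$; (2) every semicomplete digraph is in $\mathcal{W}$; (3) every symmetric digraph is in $\mathcal{W}$; (4) if $D \in \mathcal{W}$ has vertices $v_1,\dots,v_n$ and $H_1,\dots,H_n \in \mathcal{W}$, then $D[H_1,\dots,H_n] \in \mathcal{W}$. Then $\mathcal{W}$ is exactly the class of weakly quasi-transitive digraphs.
   Context: Digraphs are finite, have no loops and no multiple arcs, but may contain digons; an arc lying in a digon is called symmetric, otherwise non-symmetric. An oriented graph has no symmetric arc; a symmetric digraph has only symmetric arcs. A transitive oriented graph is an oriented graph such that arcs $uv$ and $vw$ imply the arc $uw$. A digraph is semicomplete if between any two distinct vertices there is at least one arc. $N^-(v)$ / $N^+(v)$ denote the sets of in-/out-neighbours of $v$; two vertices are adjacent if there is at least one arc between them. Two neighbours $u,w$ of $v$ are synchronous neighbours of $v$ if both lie in $N^-(v)\setminus N^+(v)$, or both in $N^+(v)\setminus N^-(v)$, or both in $N^-(v)\cap N^+(v)$; otherwise they are asynchronous. A digraph is weakly quasi-transitive if for each vertex $v$, any two asynchronous neighbours of $v$ are adjacent. For a digraph $D$ with vertices $v_1,\dots,v_n$ and vertex-disjoint digraphs $H_1,\dots,H_n$, the substitution $D[H_1,\dots,H_n]$ is the digraph obtained from the disjoint union of $H_1,\dots,H_n$ by adding all arcs $xy$ with $x \in V(H_i)$, $y \in V(H_j)$ for every arc $v_iv_j$ of $D$. *)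

theory Defs
  imports Main
begin

text \<open>A digraph is given by a vertex set V and an arc set A (a set of ordered pairs):
finite, no loops; no multiple arcs is automatic; digons allowed.\<close>

definition digraph :: "'a set \<Rightarrow> ('a \<times> 'a) set \<Rightarrow> bool" where
  "digraph V A \<longleftrightarrow> finite V \<and> A \<subseteq> V \<times> V \<and> (\<forall>v. (v, v) \<notin> A)"

definition adjacent :: "('a \<times> 'a) set \<Rightarrow> 'a \<Rightarrow> 'a \<Rightarrow> bool" where
  "adjacent A u w \<longleftrightarrow> (u, w) \<in> A \<or> (w, u) \<in> A"

definition in_nbrs :: "('a \<times> 'a) set \<Rightarrow> 'a \<Rightarrow> 'a set" where
  "in_nbrs A v = {u. (u, v) \<in> A}"

definition out_nbrs :: "('a \<times> 'a) set \<Rightarrow> 'a \<Rightarrow> 'a set" where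
  "out_nbrs A v = {u. (v, u) \<in> A}"

definition synchronous :: "('a \<times> 'a) set \<Rightarrow> 'a \<Rightarrow> 'a \<Rightarrow> 'a \<Rightarrow> bool" where
  "synchronous A v u w \<longleftrightarrow>
     (u \<in> in_nbrs A v - out_nbrs A v \<and> w \<in> in_nbrs A v - out_nbrs A v) \<or>
     (u \<in> out_nbrs A v - in_nbrs A v \<and> w \<in> out_nbrs A v - in_nbrs A v) \<or>
     (u \<in> in_nbrs A v \<inter> out_nbrs A v \<and> w \<in> in_nbrs A v \<inter> out_nbrs A v)"

definition weakly_quasi_transitive :: "'a set \<Rightarrow> ('a \<times> 'a) set \<Rightarrow> bool" where
  "weakly_quasi_transitive V A \<longleftrightarrow>
     (\<forall>v\<in>V. \<forall>u w. adjacent A v u \<and> adjacent A v w \<and> \<not> synchronous A v u w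
        \<longrightarrow> adjacent A u w)"

definition oriented :: "('a \<times> 'a) set \<Rightarrow> bool" where
  "oriented A \<longleftrightarrow> (\<forall>u v. (u, v) \<in> A \<longrightarrow> (v, u) \<notin> A)"

definition transitive_oriented :: "'a set \<Rightarrow> ('a \<times> 'a) set \<Rightarrow> bool" where
  "transitive_oriented V A \<longleftrightarrow> oriented A \<and>
     (\<forall>u v w. (u, v) \<in> A \<and> (v, w) \<in> A \<longrightarrow> (u, w) \<in> A)"

definition semicomplete :: "'a set \<Rightarrow> ('a \<times> 'a) set \<Rightarrow> bool" where
  "semicomplete V A \<longleftrightarrow> (\<forall>u\<in>V. \<forall>w\<in>V. u \<noteq> w \<longrightarrow> adjacent A u w)"

definition symmetric_digraph :: "'a set \<Rightarrow> ('a \<times> 'a) set \<Rightarrow> bool" where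
  "symmetric_digraph V A \<longleftrightarrow> (\<forall>u w. (u, w) \<in> A \<longrightarrow> (w, u) \<in> A)"

text \<open>Substitution D[H_v : v in V(D)]: HV v / HA v are the vertex / arc sets of the
digraph substituted for vertex v of D = (VD, AD).\<close>

definition subst_vertices :: "'a set \<Rightarrow> ('a \<Rightarrow> 'b set) \<Rightarrow> 'b set" where
  "subst_vertices VD HV = (\<Union>v\<in>VD. HV v)"

definition subst_arcs ::
  "'a set \<Rightarrow> ('a \<times> 'a) set \<Rightarrow> ('a \<Rightarrow> 'b set) \<Rightarrow> ('a \<Rightarrow> ('b \<times> 'b) set) \<Rightarrow> ('b \<times> 'b) set" where
  "subst_arcs VD AD HV HA = (\<Union>v\<in>VD. HA v) \<union>
     {(x, y). \<exists>u w. (u, w) \<in> AD \<and> x \<in> HV u \<and> y \<in> HV w}"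

inductive classW :: "'a set \<Rightarrow> ('a \<times> 'a) set \<Rightarrow> bool" where
  trans_or: "digraph V A \<Longrightarrow> transitive_oriented V A \<Longrightarrow> classW V A"
| semicompl: "digraph V A \<Longrightarrow> semicomplete V A \<Longrightarrow> classW V A"
| symm: "digraph V A \<Longrightarrow> symmetric_digraph V A \<Longrightarrow> classW V A"
| subst: "classW VD AD \<Longrightarrow>
          (\<And>v. v \<in> VD \<Longrightarrow> classW (HV v) (HA v)) \<Longrightarrow>
          (\<And>v. v \<in> VD \<Longrightarrow> HV v \<noteq> {}) \<Longrightarrow>
          (\<And>v w. v \<in> VD \<Longrightarrow> w \<in> VD \<Longrightarrow> v \<noteq> w \<Longrightarrow> HV v \<inter> HV w = {}) \<Longrightarrow>
          classW (subst_vertices VD HV) (subst_arcs VD AD HV HA)"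

end

theory Submission
  imports Defs
begin

definition kind :: "('a \<times> 'a) set \<Rightarrow> 'a \<Rightarrow> 'a \<Rightarrow> bool \<times> bool" where
  "kind A a b = ((a, b) \<in> A, (b, a) \<in> A)"

lemma sync_iff:
  assumes "adjacent A v u" "adjacent A v w"
  shows "synchronous A v u w \<longleftrightarrow> kind A v u = kind A v w"
  using assms unfolding synchronous_def kind_def adjacent_def in_nbrs_def out_nbrs_def by auto

lemma wqt_kind:
  assumes "weakly_quasi_transitive V A" "v \<in> V" "adjacent A v u" "adjacent A v w" "\<not> adjacent A u w"
  shows "kind A v u = kind A v w"
  using assms sync_iff unfolding weakly_quasi_transitive_def by metis

lemma wqt_intro:
  assumes "\<And>v u w. v \<in> V \<Longrightarrow> adjacent A v u \<Longrightarrow> adjacent A v w \<Longrightarrow> \<not> adjacent A u w \<Longrightarrow> kind A v u = kind A v w"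
  shows "weakly_quasi_transitive V A"
  using assms sync_iff unfolding weakly_quasi_transitive_def by metis


lemma kind_swap: "kind A a b = prod.swap (kind A b a)"
  unfolding kind_def by simp

lemma wqt_transor:
  assumes "transitive_oriented V A"
  shows "weakly_quasi_transitive V A"
proof (rule wqt_intro)
  fix v u w assume "v \<in> V" "adjacent A v u" "adjacent A v w" "\<not> adjacent A u w"
  then show "kind A v u = kind A v w"
    using assms unfolding transitive_oriented_def oriented_def kind_def adjacent_def by blast
qed

lemma wqt_semi:
  assumes "digraph V A" "semicomplete V A"
  shows "weakly_quasi_transitive V A"
proof (rule wqt_intro)
  fix v u w assume "v \<in> V" "adjacent A v u" "adjacent A v w" "\<not> adjacent A u w"
  then have "u \<in> V" "w \<in> V" using assms(1) unfolding digraph_def adjacent_def by auto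
  then have "u = w" using assms(2) \<open>\<not> adjacent A u w\<close> unfolding semicomplete_def by auto
  then show "kind A v u = kind A v w" by simp
qed

lemma wqt_sym:
  assumes "symmetric_digraph V A"
  shows "weakly_quasi_transitive V A"
proof (rule wqt_intro)
  fix v u w assume "v \<in> V" "adjacent A v u" "adjacent A v w" "\<not> adjacent A u w"
  then show "kind A v u = kind A v w"
    using assms unfolding symmetric_digraph_def kind_def adjacent_def by blast
qed

lemma subst_arc_iff:
  assumes disj: "\<And>v w. v \<in> VD \<Longrightarrow> w \<in> VD \<Longrightarrow> v \<noteq> w \<Longrightarrow> HV v \<inter> HV w = {}"
    and noloop: "\<And>v. (v, v) \<notin> AD"
    and HAsub: "\<And>v. v \<in> VD \<Longrightarrow> HA v \<subseteq> HV v \<times> HV v"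
    and AD: "AD \<subseteq> VD \<times> VD"
    and ab: "a \<in> VD" "b \<in> VD" "x \<in> HV a" "y \<in> HV b"
  shows "(x, y) \<in> subst_arcs VD AD HV HA \<longleftrightarrow> (if a = b then (x, y) \<in> HA a else (a, b) \<in> AD)"
proof
  assume "(x, y) \<in> subst_arcs VD AD HV HA"
  then consider (i) c where "c \<in> VD" "(x, y) \<in> HA c"
    | (c) u w where "(u, w) \<in> AD" "x \<in> HV u" "y \<in> HV w"
    unfolding subst_arcs_def by blast
  then show "if a = b then (x, y) \<in> HA a else (a, b) \<in> AD"
  proof cases
    case i
    then have "x \<in> HV c" "y \<in> HV c" using HAsub by auto
    then have "c = a" "c = b" using disj ab i(1) by blast+
    then show ?thesis using i by simp
  next
    case c
    then have "u \<in> VD" "w \<in> VD" using AD by auto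
    then have "u = a" "w = b" using disj ab c by blast+
    moreover have "u \<noteq> w" using c(1) noloop by metis
    ultimately show ?thesis using c by simp
  qed
next
  assume "if a = b then (x, y) \<in> HA a else (a, b) \<in> AD"
  then show "(x, y) \<in> subst_arcs VD AD HV HA"
    unfolding subst_arcs_def using ab by (cases "a = b") auto
qed

lemma subst_digraph:
  assumes "digraph VD AD"
    and H: "\<And>v. v \<in> VD \<Longrightarrow> digraph (HV v) (HA v)"
    and disj: "\<And>v w. v \<in> VD \<Longrightarrow> w \<in> VD \<Longrightarrow> v \<noteq> w \<Longrightarrow> HV v \<inter> HV w = {}"
  shows "digraph (subst_vertices VD HV) (subst_arcs VD AD HV HA)"
proof -
  have fin: "finite (subst_vertices VD HV)"
    using assms(1) H unfolding digraph_def subst_vertices_def by auto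
  have sub: "subst_arcs VD AD HV HA \<subseteq> subst_vertices VD HV \<times> subst_vertices VD HV"
    using assms(1) H unfolding digraph_def subst_vertices_def subst_arcs_def by fastforce
  have "(x, x) \<notin> subst_arcs VD AD HV HA" for x
  proof
    assume "(x, x) \<in> subst_arcs VD AD HV HA"
    then consider (i) c where "c \<in> VD" "(x, x) \<in> HA c"
      | (c) u w where "(u, w) \<in> AD" "x \<in> HV u" "x \<in> HV w"
      unfolding subst_arcs_def by blast
    then show False
    proof cases
      case i then show False using H unfolding digraph_def by blast
    next
      case c
      then have "u \<in> VD" "w \<in> VD" "u \<noteq> w" using assms(1) unfolding digraph_def by auto
      then show False using disj c by blast
    qed
  qed
  then show ?thesis using fin sub unfolding digraph_def by blast
qed

lemma subst_wqt:
  assumes D: "digraph VD AD" "weakly_quasi_transitive VD AD"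
    and H: "\<And>v. v \<in> VD \<Longrightarrow> digraph (HV v) (HA v)"
    and HW: "\<And>v. v \<in> VD \<Longrightarrow> weakly_quasi_transitive (HV v) (HA v)"
    and disj: "\<And>v w. v \<in> VD \<Longrightarrow> w \<in> VD \<Longrightarrow> v \<noteq> w \<Longrightarrow> HV v \<inter> HV w = {}"
  shows "weakly_quasi_transitive (subst_vertices VD HV) (subst_arcs VD AD HV HA)"
proof (rule wqt_intro)
  let ?V = "subst_vertices VD HV" and ?A = "subst_arcs VD AD HV HA"
  have dg: "digraph ?V ?A" by (rule subst_digraph[of VD AD HV HA]) (simp_all add: D(1) H disj)
  have arc: "(x, y) \<in> ?A \<longleftrightarrow> (if a = b then (x, y) \<in> HA a else (a, b) \<in> AD)"
    if "a \<in> VD" "b \<in> VD" "x \<in> HV a" "y \<in> HV b" for a b x y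
    by (rule subst_arc_iff[OF disj]) (use D(1) H that in \<open>auto simp: digraph_def\<close>)
  have own: "\<exists>a\<in>VD. x \<in> HV a" if "x \<in> ?V" for x
    using that unfolding subst_vertices_def by blast
  fix z x y
  assume z: "z \<in> ?V" and zx: "adjacent ?A z x" and zy: "adjacent ?A z y" and xy: "\<not> adjacent ?A x y"
  have "x \<in> ?V" "y \<in> ?V" using zx zy dg unfolding adjacent_def digraph_def by auto
  then obtain a b c where abc: "a \<in> VD" "b \<in> VD" "c \<in> VD" "z \<in> HV a" "x \<in> HV b" "y \<in> HV c"
    using own z by meson
  show "kind ?A z x = kind ?A z y"
  proof (cases "b = a")
    case True
    note ba = True
    show ?thesis
    proof (cases "c = a")
      case True
      have k1: "kind ?A z x = kind (HA a) z x" using arc[of a a z x] abc ba unfolding kind_def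
        using arc[of a a x z] by simp
      have k2: "kind ?A z y = kind (HA a) z y" using arc[of a a z y] abc True unfolding kind_def
        using arc[of a a y z] by simp
      have a1: "adjacent (HA a) z x" using zx arc[of a a z x] arc[of a a x z] abc ba
        unfolding adjacent_def by simp
      have a2: "adjacent (HA a) z y" using zy arc[of a a z y] arc[of a a y z] abc True
        unfolding adjacent_def by simp
      have a3: "\<not> adjacent (HA a) x y" using xy arc[of a a x y] arc[of a a y x] abc ba True
        unfolding adjacent_def by simp
      show ?thesis using wqt_kind[OF HW[OF abc(1)] abc(4) a1 a2 a3] k1 k2 by simp
    next
      case False
      have "(a, c) \<in> AD \<or> (c, a) \<in> AD" using zy arc[of a c z y] arc[of c a y z] abc False
        unfolding adjacent_def by auto
      then have "adjacent ?A x y" using arc[of a c x y] arc[of c a y x] abc ba False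
        unfolding adjacent_def by auto
      then show ?thesis using xy by simp
    qed
  next
    case False
    note ba = False
    show ?thesis
    proof (cases "c = a")
      case True
      have "(a, b) \<in> AD \<or> (b, a) \<in> AD" using zx arc[of a b z x] arc[of b a x z] abc ba
        unfolding adjacent_def by auto
      then have "adjacent ?A x y" using arc[of b a x y] arc[of a b y x] abc ba True
        unfolding adjacent_def by auto
      then show ?thesis using xy by simp
    next
      case False
      have k1: "kind ?A z x = kind AD a b" using arc[of a b z x] arc[of b a x z] abc ba
        unfolding kind_def by auto
      have k2: "kind ?A z y = kind AD a c" using arc[of a c z y] arc[of c a y z] abc False
        unfolding kind_def by auto
      show ?thesis
      proof (cases "b = c")
        case True then show ?thesis using k1 k2 by simp
      next
        case bc: False
        have a1: "adjacent AD a b" using zx arc[of a b z x] arc[of b a x z] abc ba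
          unfolding adjacent_def by auto
        have a2: "adjacent AD a c" using zy arc[of a c z y] arc[of c a y z] abc False
          unfolding adjacent_def by auto
        have a3: "\<not> adjacent AD b c" using xy arc[of b c x y] arc[of c b y x] abc bc
          unfolding adjacent_def by auto
        show ?thesis using wqt_kind[OF D(2) abc(1) a1 a2 a3] k1 k2 by simp
      qed
    qed
  qed
qed

lemma classW_sound: "classW V A \<Longrightarrow> digraph V A \<and> weakly_quasi_transitive V A"
proof (induction rule: classW.induct)
  case (trans_or V A) then show ?case using wqt_transor by blast
next
  case (semicompl V A) then show ?case using wqt_semi by blast
next
  case (symm V A) then show ?case using wqt_sym by blast
next
  case (subst VD AD HV HA)
  then show ?case using subst_digraph[of VD AD HV HA] subst_wqt[of VD AD HV HA] by blast
qed



definition strongM :: "('a \<times> 'a) set \<Rightarrow> 'a set \<Rightarrow> bool" where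
  "strongM A M \<longleftrightarrow> (\<forall>a\<in>M. \<forall>b\<in>M. (a, b) \<in> (A \<inter> M \<times> M)\<^sup>*)"

definition nadj :: "('a \<times> 'a) set \<Rightarrow> 'a set \<Rightarrow> ('a \<times> 'a) set" where
  "nadj A M = {(a, b). a \<in> M \<and> b \<in> M \<and> a \<noteq> b \<and> \<not> adjacent A a b}"

definition nrel :: "('a \<times> 'a) set \<Rightarrow> 'a set \<Rightarrow> ('a \<times> 'a) set" where
  "nrel A M = {(a, b). a \<in> M \<and> b \<in> M \<and> adjacent A a b \<and> \<not> ((a, b) \<in> A \<and> (b, a) \<in> A)}"

definition conn :: "('a \<times> 'a) set \<Rightarrow> 'a set \<Rightarrow> bool" where
  "conn R M \<longleftrightarrow> (\<forall>a\<in>M. \<forall>b\<in>M. (a, b) \<in> R\<^sup>*)"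

definition PiS :: "('a \<times> 'a) set \<Rightarrow> 'a set \<Rightarrow> bool" where
  "PiS A M \<longleftrightarrow> strongM A M \<and> (\<not> conn (nadj A M) M \<or> \<not> conn (nrel A M) M)"

definition module :: "'a set \<Rightarrow> ('a \<times> 'a) set \<Rightarrow> 'a set \<Rightarrow> bool" where
  "module V A M \<longleftrightarrow> M \<subseteq> V \<and> (\<forall>x\<in>V - M. \<forall>m\<in>M. \<forall>m'\<in>M. kind A x m = kind A x m')"

lemma cross:
  assumes "(a, b) \<in> R\<^sup>*" "a \<in> S" "b \<notin> S"
  shows "\<exists>c d. (c, d) \<in> R \<and> c \<in> S \<and> d \<notin> S"
  using assms by (induction rule: rtrancl_induct) auto

lemma adjacent_sym: "adjacent A u w \<longleftrightarrow> adjacent A w u"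
  unfolding adjacent_def by auto

lemma sym_nadj: "sym (nadj A M)"
  unfolding sym_def nadj_def adjacent_def by auto

lemma sym_nrel: "sym (nrel A M)"
  unfolding sym_def nrel_def adjacent_def by auto

lemma rtr_sym: "sym R \<Longrightarrow> (a, b) \<in> R\<^sup>* \<Longrightarrow> (b, a) \<in> R\<^sup>*"
  using sym_rtrancl symD by metis

lemma rtr_in: "(a, b) \<in> R\<^sup>* \<Longrightarrow> R \<subseteq> M \<times> M \<Longrightarrow> a \<in> M \<Longrightarrow> b \<in> M"
  by (induction rule: rtrancl_induct) auto

lemma nadj_sub: "nadj A M \<subseteq> M \<times> M" unfolding nadj_def by auto
lemma nrel_sub: "nrel A M \<subseteq> M \<times> M" unfolding nrel_def by auto

lemma cocomp:
  assumes W: "weakly_quasi_transitive V A" and MV: "M \<subseteq> V" and y: "y \<in> M" and p: "p \<in> M"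
    and pk: "(p, k) \<in> (nadj A M)\<^sup>*" and py: "(p, y) \<notin> (nadj A M)\<^sup>*"
  shows "adjacent A y k \<and> kind A y k = kind A y p"
  using pk
proof (induction rule: rtrancl_induct)
  case base
  have "y \<noteq> p" using py by auto
  moreover have "(p, y) \<notin> nadj A M" using py by auto
  ultimately show ?case using y p unfolding nadj_def adjacent_def by auto
next
  case (step k k')
  have k': "k' \<in> M" "\<not> adjacent A k k'" using step(2) unfolding nadj_def by auto
  have "(p, k') \<in> (nadj A M)\<^sup>*" using step(1,2) by simp
  then have "y \<noteq> k'" "(k', y) \<notin> nadj A M" using py rtrancl.rtrancl_into_rtrancl by metis+
  then have a2: "adjacent A y k'" using y k' unfolding nadj_def adjacent_def by auto
  have "kind A y k = kind A y k'"
    using wqt_kind[OF W _ _ a2 k'(2)] step(3) y MV by blast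
  then show ?case using a2 step(3) by simp
qed

lemma ncomp_step:
  assumes W: "weakly_quasi_transitive V A" and MV: "M \<subseteq> V" and y: "y \<in> M"
    and kk: "(k, k') \<in> nrel A M" and yk: "(k, y) \<notin> nrel A M" "(k', y) \<notin> nrel A M"
    and ne: "y \<noteq> k" "y \<noteq> k'"
  shows "kind A y k = kind A y k'"
proof -
  have k: "k \<in> M" "k' \<in> M" "adjacent A k k'" "\<not> ((k, k') \<in> A \<and> (k', k) \<in> A)"
    using kk unfolding nrel_def by auto
  have c1: "adjacent A y k \<Longrightarrow> (y, k) \<in> A \<and> (k, y) \<in> A"
    using yk(1) y k unfolding nrel_def adjacent_def by auto
  have c2: "adjacent A y k' \<Longrightarrow> (y, k') \<in> A \<and> (k', y) \<in> A"
    using yk(2) y k unfolding nrel_def adjacent_def by auto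
  have "adjacent A y k \<longleftrightarrow> adjacent A y k'"
  proof
    assume a: "adjacent A y k"
    show "adjacent A y k'"
    proof (rule ccontr)
      assume na: "\<not> adjacent A y k'"
      have "k \<in> V" using k MV by auto
      moreover have "adjacent A k y" using a adjacent_sym by metis
      ultimately have "kind A k y = kind A k k'"
        using wqt_kind[OF W _ _ k(3) na] by blast
      then show False using c1[OF a] k(4) unfolding kind_def by auto
    qed
  next
    assume a: "adjacent A y k'"
    show "adjacent A y k"
    proof (rule ccontr)
      assume na: "\<not> adjacent A y k"
      have "k' \<in> V" using k MV by auto
      moreover have "adjacent A k' y" using a adjacent_sym by metis
      moreover have "adjacent A k' k" using k(3) adjacent_sym by metis
      ultimately have "kind A k' y = kind A k' k"
        using wqt_kind[OF W, of k' y k] na by blast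
      then show False using c2[OF a] k(4) unfolding kind_def by auto
    qed
  qed
  then show ?thesis using c1 c2 unfolding kind_def adjacent_def by auto
qed

lemma ncomp:
  assumes W: "weakly_quasi_transitive V A" and MV: "M \<subseteq> V" and y: "y \<in> M"
    and pk: "(p, k) \<in> (nrel A M)\<^sup>*" and py: "(p, y) \<notin> (nrel A M)\<^sup>*"
  shows "kind A y k = kind A y p"
  using pk
proof (induction rule: rtrancl_induct)
  case base then show ?case by simp
next
  case (step k k')
  have "(p, k') \<in> (nrel A M)\<^sup>*" using step(1,2) by simp
  then have "(k', y) \<notin> nrel A M" "y \<noteq> k'" using py rtrancl.rtrancl_into_rtrancl by metis+
  moreover have "(k, y) \<notin> nrel A M" "y \<noteq> k" using py step(1) rtrancl.rtrancl_into_rtrancl by metis+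
  ultimately have "kind A y k = kind A y k'" using ncomp_step[OF W MV y step(2)] by blast
  then show ?case using step(3) by simp
qed


lemma strong_cross:
  assumes "strongM A M" "a \<in> M" "a \<in> S" "b \<in> M" "b \<notin> S"
  shows "\<exists>c d. (c, d) \<in> A \<and> c \<in> M \<and> d \<in> M \<and> c \<in> S \<and> d \<notin> S"
proof -
  have "(a, b) \<in> (A \<inter> M \<times> M)\<^sup>*" using assms unfolding strongM_def by blast
  then show ?thesis using cross[of a b "A \<inter> M \<times> M" S] assms by blast
qed

lemma comp_not_all:
  assumes "\<not> conn R M" "sym R" "p \<in> M"
  shows "\<exists>w\<in>M. (p, w) \<notin> R\<^sup>*"
proof (rule ccontr)
  assume "\<not> ?thesis"
  then have all: "\<forall>w\<in>M. (p, w) \<in> R\<^sup>*" by blast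
  have "conn R M" unfolding conn_def
  proof (intro ballI)
    fix a b assume "a \<in> M" "b \<in> M"
    then have "(a, p) \<in> R\<^sup>*" "(p, b) \<in> R\<^sup>*" using all rtr_sym[OF assms(2)] by blast+
    then show "(a, b) \<in> R\<^sup>*" by simp
  qed
  then show False using assms(1) by simp
qed

lemma growN:
  assumes dg: "digraph V A" and W: "weakly_quasi_transitive V A" and MV: "M \<subseteq> V"
    and st: "strongM A M" and x: "x \<in> V" "x \<notin> M" and q: "q \<in> M" "\<not> adjacent A x q"
    and nc: "\<not> conn (nrel A M) M" and c': "conn (nrel A (insert x M)) (insert x M)"
  shows False
proof -
  let ?R = "nrel A M" and ?R' = "nrel A (insert x M)"
  have symR: "sym ?R" by (rule sym_nrel)
  obtain z where z: "z \<in> M" "(q, z) \<notin> ?R\<^sup>*" using comp_not_all[OF nc symR q(1)] by blast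
  have qin: "q \<in> {w. (q, w) \<in> ?R\<^sup>*}" by simp
  have zout: "z \<notin> {w. (q, w) \<in> ?R\<^sup>*}" using z(2) by simp
  obtain y z' where yz0: "(y, z') \<in> A" "y \<in> M" "z' \<in> M" "y \<in> {w. (q, w) \<in> ?R\<^sup>*}"
      "z' \<notin> {w. (q, w) \<in> ?R\<^sup>*}"
    using strong_cross[OF st q(1) qin z(1) zout] by blast
  then have yz: "(y, z') \<in> A" "y \<in> M" "z' \<in> M" "(q, y) \<in> ?R\<^sup>*" "(q, z') \<notin> ?R\<^sup>*"
    by simp_all
  have z'q: "(z', q) \<notin> ?R\<^sup>*" using yz(5) rtr_sym[OF symR] by blast
  have "(z', q) \<in> ?R'\<^sup>*" using c' yz(3) q(1) unfolding conn_def by blast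
  moreover have "z' \<in> {w. (z', w) \<in> ?R\<^sup>*}" by simp
  moreover have "q \<notin> {w. (z', w) \<in> ?R\<^sup>*}" using z'q by simp
  ultimately obtain c d where cd: "(c, d) \<in> ?R'" "c \<in> {w. (z', w) \<in> ?R\<^sup>*}" "d \<notin> {w. (z', w) \<in> ?R\<^sup>*}"
    using cross[of z' q ?R' "{w. (z', w) \<in> ?R\<^sup>*}"] by blast
  have zc: "(z', c) \<in> ?R\<^sup>*" using cd(2) by simp
  have cM: "c \<in> M" using rtr_in[OF zc nrel_sub yz(3)] .
  have "d = x"
  proof (rule ccontr)
    assume "d \<noteq> x"
    then have "d \<in> M" using cd(1) unfolding nrel_def by auto
    then have "(c, d) \<in> ?R" using cd(1) cM unfolding nrel_def by auto
    with zc have "(z', d) \<in> ?R\<^sup>*" by (rule rtrancl.rtrancl_into_rtrancl)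
    then show False using cd(3) by simp
  qed
  then have cx: "adjacent A c x" "\<not> ((c, x) \<in> A \<and> (x, c) \<in> A)"
    using cd(1) unfolding nrel_def by auto
  have "(y, z') \<notin> ?R"
  proof
    assume "(y, z') \<in> ?R"
    then have "(q, z') \<in> ?R\<^sup>*" using yz(4) by (metis rtrancl.rtrancl_into_rtrancl)
    then show False using yz(5) by simp
  qed
  then have zy: "(z', y) \<in> A" using yz unfolding nrel_def adjacent_def by auto
  have "(z', y) \<notin> ?R\<^sup>*"
  proof
    assume "(z', y) \<in> ?R\<^sup>*"
    then have "(y, z') \<in> ?R\<^sup>*" using rtr_sym[OF symR] by blast
    then have "(q, z') \<in> ?R\<^sup>*" using yz(4) by (metis rtrancl_trans)
    then show False using yz(5) by simp
  qed
  then have "kind A y c = kind A y z'" using ncomp[OF W MV yz(2) zc] by blast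
  then have yc: "(y, c) \<in> A" "(c, y) \<in> A" using zy yz(1) unfolding kind_def by auto
  have "(q, c) \<notin> ?R\<^sup>*"
  proof
    assume "(q, c) \<in> ?R\<^sup>*"
    moreover have "(c, z') \<in> ?R\<^sup>*" using zc rtr_sym[OF symR] by blast
    ultimately have "(q, z') \<in> ?R\<^sup>*" by (metis rtrancl_trans)
    then show False using yz(5) by simp
  qed
  then have "kind A c y = kind A c q" using ncomp[OF W MV cM yz(4)] by blast
  then have cq: "(c, q) \<in> A" "(q, c) \<in> A" using yc unfolding kind_def by auto
  have "c \<in> V" using cM MV by auto
  moreover have "adjacent A c q" using cq unfolding adjacent_def by auto
  moreover have "\<not> adjacent A q x" using q(2) adjacent_sym by metis
  ultimately have "kind A c q = kind A c x" using wqt_kind[OF W _ _ cx(1)] by blast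
  then show False using cq cx(2) unfolding kind_def by auto
qed


lemma growG:
  assumes dg: "digraph V A" and W: "weakly_quasi_transitive V A" and MV: "M \<subseteq> V"
    and st: "strongM A M" and x: "x \<in> V" "x \<notin> M"
    and nc: "\<not> conn (nadj A M) M" and c': "conn (nadj A (insert x M)) (insert x M)"
    and p: "p \<in> M" "adjacent A x p"
  shows "(x, p) \<in> A \<and> (p, x) \<in> A"
proof -
  let ?R = "nadj A M" and ?R' = "nadj A (insert x M)"
  have symR: "sym ?R" by (rule sym_nadj)
  have pV: "p \<in> V" using p MV by auto
  have px: "adjacent A p x" using p(2) adjacent_sym by metis
  have claimA: "kind A p w = kind A p x" if w: "w \<in> M" "(p, w) \<notin> ?R\<^sup>*" for w
  proof -
    have wp: "(w, p) \<notin> ?R\<^sup>*" using w(2) rtr_sym[OF symR] by blast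
    have "(w, p) \<in> ?R'\<^sup>*" using c' w(1) p(1) unfolding conn_def by blast
    moreover have "w \<in> {v. (w, v) \<in> ?R\<^sup>*}" by simp
    moreover have "p \<notin> {v. (w, v) \<in> ?R\<^sup>*}" using wp by simp
    ultimately obtain c d where cd: "(c, d) \<in> ?R'" "c \<in> {v. (w, v) \<in> ?R\<^sup>*}" "d \<notin> {v. (w, v) \<in> ?R\<^sup>*}"
      using cross[of w p ?R' "{v. (w, v) \<in> ?R\<^sup>*}"] by blast
    have wc: "(w, c) \<in> ?R\<^sup>*" using cd(2) by simp
    have cM: "c \<in> M" using rtr_in[OF wc nadj_sub w(1)] .
    have "d = x"
    proof (rule ccontr)
      assume "d \<noteq> x"
      then have "d \<in> M" using cd(1) unfolding nadj_def by auto
      then have "(c, d) \<in> ?R" using cd(1) cM unfolding nadj_def by auto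
      with wc have "(w, d) \<in> ?R\<^sup>*" by (rule rtrancl.rtrancl_into_rtrancl)
      then show False using cd(3) by simp
    qed
    then have cx: "\<not> adjacent A c x" using cd(1) unfolding nadj_def by auto
    have "adjacent A p c \<and> kind A p c = kind A p w" using cocomp[OF W MV p(1) w(1) wc wp] .
    moreover have "kind A p c = kind A p x"
      using wqt_kind[OF W pV _ px cx] calculation by blast
    ultimately show ?thesis by simp
  qed
  have claimB: "kind A k w = kind A p x"
    if k: "k \<in> M" "(p, k) \<in> ?R\<^sup>*" and w: "w \<in> M" "(p, w) \<notin> ?R\<^sup>*" for k w
  proof -
    have "adjacent A w k \<and> kind A w k = kind A w p" using cocomp[OF W MV w(1) p(1) k(2) w(2)] .
    then have "kind A k w = kind A p w" using kind_swap[of A k w] kind_swap[of A p w] by simp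
    then show ?thesis using claimA[OF w] by simp
  qed
  obtain w0 where w0: "w0 \<in> M" "(p, w0) \<notin> ?R\<^sup>*" using comp_not_all[OF nc symR p(1)] by blast
  have "(p, x) \<in> A"
  proof (rule ccontr)
    assume npx: "(p, x) \<notin> A"
    have "p \<in> {v. (p, v) \<in> ?R\<^sup>*}" by simp
    moreover have "w0 \<notin> {v. (p, v) \<in> ?R\<^sup>*}" using w0 by simp
    ultimately obtain c d where cd: "(c, d) \<in> A" "c \<in> M" "d \<in> M" "c \<in> {v. (p, v) \<in> ?R\<^sup>*}"
        "d \<notin> {v. (p, v) \<in> ?R\<^sup>*}"
      using strong_cross[OF st p(1) _ w0(1)] by blast
    then have "kind A c d = kind A p x" using claimB by simp
    then show False using cd(1) npx unfolding kind_def by simp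
  qed
  moreover have "(x, p) \<in> A"
  proof (rule ccontr)
    assume nxp: "(x, p) \<notin> A"
    have "w0 \<in> {v. (p, v) \<notin> ?R\<^sup>*}" using w0 by simp
    moreover have "p \<notin> {v. (p, v) \<notin> ?R\<^sup>*}" by simp
    ultimately obtain c d where cd: "(c, d) \<in> A" "c \<in> M" "d \<in> M" "c \<in> {v. (p, v) \<notin> ?R\<^sup>*}"
        "d \<notin> {v. (p, v) \<notin> ?R\<^sup>*}"
      using strong_cross[OF st w0(1) _ p(1)] by blast
    then have "kind A d c = kind A p x" using claimB by simp
    then show False using cd(1) nxp unfolding kind_def by simp
  qed
  ultimately show ?thesis by simp
qed


lemma no_out_rtrancl:
  assumes "\<forall>y. (x, y) \<notin> R" "(x, z) \<in> R\<^sup>*"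
  shows "z = x"
  using assms(2,1) by (induction rule: converse_rtrancl_induct) auto

lemma grow:
  assumes dg: "digraph V A" and W: "weakly_quasi_transitive V A" and MV: "M \<subseteq> V"
    and Pi: "PiS A M" and x: "x \<in> V" "x \<notin> M"
    and m: "m1 \<in> M" "m2 \<in> M" and kd: "kind A x m1 \<noteq> kind A x m2"
  shows "PiS A (insert x M)"
proof -
  let ?M' = "insert x M"
  have st: "strongM A M" and dj: "\<not> conn (nadj A M) M \<or> \<not> conn (nrel A M) M"
    using Pi unfolding PiS_def by auto
  have io: "(\<exists>p\<in>M. (p, x) \<in> A) \<and> (\<exists>p\<in>M. (x, p) \<in> A)"
  proof (cases "\<forall>m\<in>M. adjacent A x m")
    case True
    then have "adjacent A x m1" "adjacent A x m2" using m by auto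
    then show ?thesis using kd m unfolding kind_def adjacent_def by auto
  next
    case False
    then obtain q where q: "q \<in> M" "\<not> adjacent A x q" by blast
    obtain p0 where p0: "p0 \<in> M" "adjacent A x p0"
    proof (cases "\<exists>p0\<in>M. adjacent A x p0")
      case True then show ?thesis using that by blast
    next
      case False
      then have "kind A x m1 = (False, False)" "kind A x m2 = (False, False)"
        using m unfolding kind_def adjacent_def by auto
      then show ?thesis using kd by simp
    qed
    have 1: "\<exists>p\<in>M. (p, x) \<in> A"
    proof -
      have "p0 \<in> {m. adjacent A x m}" "q \<notin> {m. adjacent A x m}" using p0 q by auto
      from strong_cross[OF st p0(1) this(1) q(1) this(2)]
      obtain c d where cd: "(c, d) \<in> A" "c \<in> M" "d \<in> M" "adjacent A x c" "\<not> adjacent A x d"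
        by auto
      have cV: "c \<in> V" using cd MV by auto
      have a1: "adjacent A c x" using cd(4) adjacent_sym by metis
      have a2: "adjacent A c d" using cd(1) unfolding adjacent_def by auto
      have "kind A c x = kind A c d" using wqt_kind[OF W cV a1 a2 cd(5)] .
      then show ?thesis using cd unfolding kind_def by auto
    qed
    have 2: "\<exists>p\<in>M. (x, p) \<in> A"
    proof -
      have "q \<in> {m. \<not> adjacent A x m}" "p0 \<notin> {m. \<not> adjacent A x m}" using p0 q by auto
      from strong_cross[OF st q(1) this(1) p0(1) this(2)]
      obtain c d where cd: "(c, d) \<in> A" "c \<in> M" "d \<in> M" "\<not> adjacent A x c" "adjacent A x d"
        by auto
      have dV: "d \<in> V" using cd MV by auto
      have a1: "adjacent A d x" using cd(5) adjacent_sym by metis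
      have a2: "adjacent A d c" using cd(1) unfolding adjacent_def by auto
      have "kind A d x = kind A d c" using wqt_kind[OF W dV a1 a2 cd(4)] .
      then show ?thesis using cd unfolding kind_def by auto
    qed
    show ?thesis using 1 2 by blast
  qed
  have mono: "(A \<inter> M \<times> M)\<^sup>* \<subseteq> (A \<inter> ?M' \<times> ?M')\<^sup>*" by (rule rtrancl_mono) auto
  obtain pi po where pio: "pi \<in> M" "(pi, x) \<in> A" "po \<in> M" "(x, po) \<in> A" using io by blast
  have st': "strongM A ?M'" unfolding strongM_def
  proof (intro ballI)
    fix a b assume a: "a \<in> ?M'" and b: "b \<in> ?M'"
    have inM: "(a', b') \<in> (A \<inter> ?M' \<times> ?M')\<^sup>*" if "a' \<in> M" "b' \<in> M" for a' b'
      using st that mono unfolding strongM_def by blast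
    have e1: "(pi, x) \<in> (A \<inter> ?M' \<times> ?M')\<^sup>*" using pio by auto
    have e2: "(x, po) \<in> (A \<inter> ?M' \<times> ?M')\<^sup>*" using pio by auto
    show "(a, b) \<in> (A \<inter> ?M' \<times> ?M')\<^sup>*"
    proof (cases "a = x")
      case True
      show ?thesis
      proof (cases "b = x")
        case True then show ?thesis using \<open>a = x\<close> by simp
      next
        case False
        then have "b \<in> M" using b by auto
        then show ?thesis using \<open>a = x\<close> e2 inM[OF pio(3)] by (metis rtrancl_trans)
      qed
    next
      case False
      then have aM: "a \<in> M" using a by auto
      show ?thesis
      proof (cases "b = x")
        case True then show ?thesis using e1 inM[OF aM pio(1)] by (metis rtrancl_trans)
      next
        case False
        then have "b \<in> M" using b by auto
        then show ?thesis using inM[OF aM] by blast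
      qed
    qed
  qed
  have dj': "\<not> conn (nadj A ?M') ?M' \<or> \<not> conn (nrel A ?M') ?M'"
  proof (cases "\<forall>m\<in>M. adjacent A x m")
    case True
    have "\<forall>y. (x, y) \<notin> nadj A ?M'" using True unfolding nadj_def by auto
    moreover have "x \<noteq> m1" using m x by auto
    ultimately have "(x, m1) \<notin> (nadj A ?M')\<^sup>*" using no_out_rtrancl by metis
    then show ?thesis unfolding conn_def using m by auto
  next
    case False
    then obtain q where q: "q \<in> M" "\<not> adjacent A x q" by blast
    from dj show ?thesis
    proof
      assume ncn: "\<not> conn (nadj A M) M"
      show ?thesis
      proof (cases "conn (nadj A ?M') ?M'")
        case False then show ?thesis by simp
      next
        case True
        have iso: "(x, p) \<in> A \<and> (p, x) \<in> A" if "p \<in> M" "adjacent A x p" for p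
          using growG[OF dg W MV st x ncn True that] .
        have "\<forall>y. (x, y) \<notin> nrel A ?M'"
        proof (intro allI notI)
          fix y assume y: "(x, y) \<in> nrel A ?M'"
          then have "adjacent A x y" "y \<in> ?M'" "\<not> ((x, y) \<in> A \<and> (y, x) \<in> A)"
            unfolding nrel_def by auto
          moreover have "y \<noteq> x" using calculation(1) dg unfolding adjacent_def digraph_def by auto
          ultimately show False using iso by auto
        qed
        moreover have "x \<noteq> q" using q x by auto
        ultimately have "(x, q) \<notin> (nrel A ?M')\<^sup>*" using no_out_rtrancl by metis
        then show ?thesis unfolding conn_def using q by auto
      qed
    next
      assume ncn: "\<not> conn (nrel A M) M"
      have "\<not> conn (nrel A ?M') ?M'"
        using growN[OF dg W MV st x q ncn] by blast
      then show ?thesis by simp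
    qed
  qed
  show ?thesis using st' dj' unfolding PiS_def by simp
qed


lemma induced_digraph: "digraph V A \<Longrightarrow> U \<subseteq> V \<Longrightarrow> digraph U (A \<inter> U \<times> U)"
  unfolding digraph_def using finite_subset by blast

lemma induced_wqt:
  assumes W: "weakly_quasi_transitive V A" and UV: "U \<subseteq> V"
  shows "weakly_quasi_transitive U (A \<inter> U \<times> U)"
proof (rule wqt_intro)
  fix v u w assume v: "v \<in> U" and vu: "adjacent (A \<inter> U \<times> U) v u" and vw: "adjacent (A \<inter> U \<times> U) v w"
    and uw: "\<not> adjacent (A \<inter> U \<times> U) u w"
  have uU: "u \<in> U" "w \<in> U" using vu vw unfolding adjacent_def by auto
  have "adjacent A v u" "adjacent A v w" using vu vw unfolding adjacent_def by auto
  moreover have "\<not> adjacent A u w" using uw uU unfolding adjacent_def by auto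
  ultimately have "kind A v u = kind A v w" using wqt_kind[OF W] v UV by blast
  then show "kind (A \<inter> U \<times> U) v u = kind (A \<inter> U \<times> U) v w"
    using v uU unfolding kind_def by auto
qed

lemma classW_single: "classW {v} {}"
  by (rule classW.trans_or) (auto simp: digraph_def transitive_oriented_def oriented_def)

lemma module_decomp:
  assumes dg: "digraph V A" and md: "module V A M" and m: "m \<in> M"
  defines "VD \<equiv> insert m (V - M)"
  defines "HV \<equiv> (\<lambda>v. if v = m then M else {v})"
  defines "HA \<equiv> (\<lambda>v. if v = m then A \<inter> M \<times> M else {})"
  shows "subst_vertices VD HV = V" "subst_arcs VD (A \<inter> VD \<times> VD) HV HA = A"
proof -
  have MV: "M \<subseteq> V" using md unfolding module_def by auto
  have kd: "\<And>x m1 m2. x \<in> V - M \<Longrightarrow> m1 \<in> M \<Longrightarrow> m2 \<in> M \<Longrightarrow> kind A x m1 = kind A x m2"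
    using md unfolding module_def by blast
  show "subst_vertices VD HV = V"
    unfolding subst_vertices_def VD_def HV_def using MV m by auto
  have AV: "A \<subseteq> V \<times> V" and nl: "\<And>v. (v, v) \<notin> A" using dg unfolding digraph_def by auto
  show "subst_arcs VD (A \<inter> VD \<times> VD) HV HA = A"
  proof
    show "subst_arcs VD (A \<inter> VD \<times> VD) HV HA \<subseteq> A"
    proof
      fix e assume "e \<in> subst_arcs VD (A \<inter> VD \<times> VD) HV HA"
      then obtain a b where e: "e = (a, b)" and "(a, b) \<in> subst_arcs VD (A \<inter> VD \<times> VD) HV HA"
        by (cases e) auto
      then consider (i) "(a, b) \<in> A \<inter> M \<times> M"
        | (c) u w where "(u, w) \<in> A" "u \<in> VD" "w \<in> VD" "a \<in> HV u" "b \<in> HV w"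
        unfolding subst_arcs_def HA_def by (auto split: if_splits)
      then show "e \<in> A"
      proof cases
        case i then show ?thesis using e by auto
      next
        case c
        show ?thesis
        proof (cases "u = m")
          case True
          then have "w \<noteq> m" using c(1) nl by auto
          then have "b = w" "w \<in> V - M" using c unfolding HV_def VD_def by auto
          moreover have "a \<in> M" using c True unfolding HV_def by auto
          ultimately show ?thesis using kd[of w a m] c(1) True e m unfolding kind_def by auto
        next
          case False
          then have "a = u" using c unfolding HV_def by auto
          show ?thesis
          proof (cases "w = m")
            case True
            then have "b \<in> M" using c unfolding HV_def by auto
            moreover have "u \<in> V - M" using False c unfolding VD_def by auto
            ultimately show ?thesis using kd[of u b m] c(1) True e m \<open>a = u\<close> unfolding kind_def by auto
          next
            case False
            then have "b = w" using c unfolding HV_def by auto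
            then show ?thesis using c(1) e \<open>a = u\<close> by simp
          qed
        qed
      qed
    qed
  next
    show "A \<subseteq> subst_arcs VD (A \<inter> VD \<times> VD) HV HA"
    proof
      fix e assume eA: "e \<in> A"
      then obtain a b where e: "e = (a, b)" by (cases e) auto
      have ab: "a \<in> V" "b \<in> V" "a \<noteq> b" using eA e AV nl by auto
      show "e \<in> subst_arcs VD (A \<inter> VD \<times> VD) HV HA"
      proof (cases "a \<in> M")
        case aM: True
        show ?thesis
        proof (cases "b \<in> M")
          case True
          then show ?thesis using aM eA e m unfolding subst_arcs_def HA_def VD_def by auto
        next
          case False
          have "(m, b) \<in> A" using kd[of b a m] aM m False ab eA e unfolding kind_def by auto
          moreover have "b \<noteq> m" using False m by auto
          ultimately show ?thesis using aM False ab e m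
            unfolding subst_arcs_def HV_def VD_def by auto
        qed
      next
        case aM: False
        show ?thesis
        proof (cases "b \<in> M")
          case True
          have "(a, m) \<in> A" using kd[of a b m] aM m True ab eA e unfolding kind_def by auto
          moreover have "a \<noteq> m" using aM m by auto
          ultimately show ?thesis using aM True ab e m
            unfolding subst_arcs_def HV_def VD_def by auto
        next
          case False
          have "a \<noteq> m" "b \<noteq> m" using aM False m by auto
          then show ?thesis using aM False ab e eA
            unfolding subst_arcs_def HV_def VD_def by auto
        qed
      qed
    qed
  qed
qed


lemma cocomp_module:
  assumes W: "weakly_quasi_transitive V A" and u: "u \<in> V"
  shows "module V A {y \<in> V. (u, y) \<in> (nadj A V)\<^sup>*}"
  unfolding module_def
proof (intro conjI ballI)
  fix x m1 m2 assume x: "x \<in> V - {y \<in> V. (u, y) \<in> (nadj A V)\<^sup>*}"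
    and m: "m1 \<in> {y \<in> V. (u, y) \<in> (nadj A V)\<^sup>*}" "m2 \<in> {y \<in> V. (u, y) \<in> (nadj A V)\<^sup>*}"
  have xV: "x \<in> V" and xu: "(u, x) \<notin> (nadj A V)\<^sup>*" using x by auto
  have "kind A x m1 = kind A x u" using cocomp[OF W subset_refl xV u _ xu] m(1) by blast
  moreover have "kind A x m2 = kind A x u" using cocomp[OF W subset_refl xV u _ xu] m(2) by blast
  ultimately show "kind A x m1 = kind A x m2" by simp
qed auto

lemma ncomp_module:
  assumes W: "weakly_quasi_transitive V A" and u: "u \<in> V"
  shows "module V A {y \<in> V. (u, y) \<in> (nrel A V)\<^sup>*}"
  unfolding module_def
proof (intro conjI ballI)
  fix x m1 m2 assume x: "x \<in> V - {y \<in> V. (u, y) \<in> (nrel A V)\<^sup>*}"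
    and m: "m1 \<in> {y \<in> V. (u, y) \<in> (nrel A V)\<^sup>*}" "m2 \<in> {y \<in> V. (u, y) \<in> (nrel A V)\<^sup>*}"
  have xV: "x \<in> V" and xu: "(u, x) \<notin> (nrel A V)\<^sup>*" using x by auto
  have "kind A x m1 = kind A x u" using ncomp[OF W subset_refl xV _ xu] m(1) by blast
  moreover have "kind A x m2 = kind A x u" using ncomp[OF W subset_refl xV _ xu] m(2) by blast
  ultimately show "kind A x m1 = kind A x m2" by simp
qed auto

lemma cyc:
  assumes dg: "digraph V A" and W: "weakly_quasi_transitive V A"
    and wu: "(w, u) \<in> A\<^sup>+" and uw: "(u, w) \<in> A"
  shows "(\<exists>a b. (a, b) \<in> A \<and> (b, a) \<in> A) \<or> (\<exists>a b c. (a, b) \<in> A \<and> (b, c) \<in> A \<and> (c, a) \<in> A)"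
  using wu uw
proof (induction rule: converse_trancl_induct)
  case (base w)
  then show ?case by blast
next
  case (step w p)
  show ?case
  proof (cases "(w, u) \<in> A")
    case True then show ?thesis using step(4) by blast
  next
    case wu: False
    have AV: "A \<subseteq> V \<times> V" using dg unfolding digraph_def by auto
    have wV: "w \<in> V" using step(1) AV by auto
    have a1: "adjacent A w u" using step(4) unfolding adjacent_def by auto
    have a2: "adjacent A w p" using step(1) unfolding adjacent_def by auto
    show ?thesis
    proof (cases "adjacent A u p")
      case False
      have "kind A w u = kind A w p" using wqt_kind[OF W wV a1 a2 False] .
      then show ?thesis using wu step(1) unfolding kind_def by auto
    next
      case True
      then show ?thesis
      proof (cases "(p, u) \<in> A")
        case True then show ?thesis using step(1,4) by blast
      next
        case False
        then have "(u, p) \<in> A" using \<open>adjacent A u p\<close> unfolding adjacent_def by auto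
        then show ?thesis using step(3) by blast
      qed
    qed
  qed
qed

lemma Pi_clique:
  assumes "strongM A S" "a \<in> S" "b \<in> S" "a \<noteq> b"
    and "\<forall>x\<in>S. \<forall>y\<in>S. x \<noteq> y \<longrightarrow> adjacent A x y"
  shows "PiS A S"
proof -
  have "nadj A S = {}" using assms(5) unfolding nadj_def by auto
  then have "(a, b) \<notin> (nadj A S)\<^sup>*" using assms(4) by simp
  then have "\<not> conn (nadj A S) S" using assms(2,3) unfolding conn_def by blast
  then show ?thesis using assms(1) unfolding PiS_def by simp
qed

lemma seedS:
  assumes dg: "digraph V A" and W: "weakly_quasi_transitive V A" and uu: "(u, u) \<in> A\<^sup>+"
  shows "\<exists>S. S \<subseteq> V \<and> 2 \<le> card S \<and> PiS A S"
proof -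
  have AV: "A \<subseteq> V \<times> V" and nl: "\<And>v. (v, v) \<notin> A" using dg unfolding digraph_def by auto
  obtain w where uw: "(u, w) \<in> A" and wu: "(w, u) \<in> A\<^sup>*" using tranclD[OF uu] by blast
  have "w \<noteq> u" using uw nl by auto
  then have wu': "(w, u) \<in> A\<^sup>+" using wu rtranclD by metis
  from cyc[OF dg W wu' uw] show ?thesis
  proof
    assume "\<exists>a b. (a, b) \<in> A \<and> (b, a) \<in> A"
    then obtain a b where ab: "(a, b) \<in> A" "(b, a) \<in> A" by blast
    let ?S = "{a, b}"
    have ne: "a \<noteq> b" using ab nl by auto
    have sub: "?S \<subseteq> V" using ab AV by auto
    have st: "strongM A ?S" unfolding strongM_def
    proof (intro ballI)
      fix x y assume "x \<in> ?S" "y \<in> ?S"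
      moreover have "(a, b) \<in> (A \<inter> ?S \<times> ?S)\<^sup>*" "(b, a) \<in> (A \<inter> ?S \<times> ?S)\<^sup>*" using ab by auto
      ultimately show "(x, y) \<in> (A \<inter> ?S \<times> ?S)\<^sup>*" by auto
    qed
    have "PiS A ?S" by (rule Pi_clique[OF st, of a b]) (use ne ab in \<open>auto simp: adjacent_def\<close>)
    moreover have "card ?S = 2" using ne by simp
    ultimately have "?S \<subseteq> V \<and> 2 \<le> card ?S \<and> PiS A ?S" using sub by simp
    then show ?thesis by (rule exI)
  next
    assume "\<exists>a b c. (a, b) \<in> A \<and> (b, c) \<in> A \<and> (c, a) \<in> A"
    then obtain a b c where abc: "(a, b) \<in> A" "(b, c) \<in> A" "(c, a) \<in> A" by blast
    let ?S = "{a, b, c}"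
    let ?R = "A \<inter> ?S \<times> ?S"
    have ne: "a \<noteq> b" "b \<noteq> c" "c \<noteq> a" using abc nl by metis+
    have sub: "?S \<subseteq> V" using abc AV by auto
    have e: "(a, b) \<in> ?R\<^sup>*" "(b, c) \<in> ?R\<^sup>*" "(c, a) \<in> ?R\<^sup>*" using abc by auto
    have e2: "(a, c) \<in> ?R\<^sup>*" "(b, a) \<in> ?R\<^sup>*" "(c, b) \<in> ?R\<^sup>*"
      using rtrancl_trans[OF e(1) e(2)] rtrancl_trans[OF e(2) e(3)] rtrancl_trans[OF e(3) e(1)] by auto
    have st: "strongM A ?S" unfolding strongM_def
    proof (intro ballI)
      fix x y assume "x \<in> ?S" "y \<in> ?S"
      then show "(x, y) \<in> ?R\<^sup>*" using e e2 by auto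
    qed
    have "PiS A ?S" by (rule Pi_clique[OF st, of a b]) (use ne abc in \<open>auto simp: adjacent_def\<close>)
    moreover have "card ?S = 3" using ne by simp
    ultimately have "?S \<subseteq> V \<and> 2 \<le> card ?S \<and> PiS A ?S" using sub by simp
    then show ?thesis by (rule exI)
  qed
qed

lemma acyc_trans:
  assumes dg: "digraph V A" and W: "weakly_quasi_transitive V A" and ac: "\<forall>u. (u, u) \<notin> A\<^sup>+"
  shows "transitive_oriented V A"
proof -
  have AV: "A \<subseteq> V \<times> V" and nl: "\<And>v. (v, v) \<notin> A" using dg unfolding digraph_def by auto
  have or: "oriented A" unfolding oriented_def
  proof (intro allI impI notI)
    fix u v assume "(u, v) \<in> A" "(v, u) \<in> A"
    then have "(u, u) \<in> A\<^sup>+" by (meson r_into_trancl trancl_trans)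
    then show False using ac by blast
  qed
  have "(u, w) \<in> A" if uv: "(u, v) \<in> A" and vw: "(v, w) \<in> A" for u v w
  proof -
    have vV: "v \<in> V" using uv AV by auto
    have nvu: "(v, u) \<notin> A" and nwv: "(w, v) \<notin> A" using or uv vw unfolding oriented_def by auto
    have a1: "adjacent A v u" "adjacent A v w" using uv vw unfolding adjacent_def by auto
    have "adjacent A u w"
    proof (rule ccontr)
      assume "\<not> adjacent A u w"
      then have "kind A v u = kind A v w" using wqt_kind[OF W vV a1] by blast
      then show False using nvu uv vw unfolding kind_def by auto
    qed
    moreover have "(w, u) \<notin> A"
    proof
      assume "(w, u) \<in> A"
      then have "(u, u) \<in> A\<^sup>+" using uv vw by (meson r_into_trancl trancl_trans)
      then show False using ac by blast
    qed
    ultimately show ?thesis unfolding adjacent_def by auto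
  qed
  then show ?thesis using or unfolding transitive_oriented_def by blast
qed


lemma complete:
  assumes "digraph V A" "weakly_quasi_transitive V A"
  shows "classW V A"
  using assms
proof (induction "card V" arbitrary: V A rule: less_induct)
  case less
  have dg: "digraph V A" and W: "weakly_quasi_transitive V A" using less.prems by auto
  have fin: "finite V" and AV: "A \<subseteq> V \<times> V" and nl: "\<And>v. (v, v) \<notin> A"
    using dg unfolding digraph_def by auto
  show "classW V A"
  proof (cases "\<exists>M. module V A M \<and> 2 \<le> card M \<and> M \<noteq> V")
    case True
    then obtain M where M: "module V A M" "2 \<le> card M" "M \<noteq> V" by blast
    have MV: "M \<subseteq> V" using M(1) unfolding module_def by auto
    have finM: "finite M" using MV fin finite_subset by blast
    have "M \<noteq> {}" using M(2) by auto
    then obtain m where m: "m \<in> M" by blast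
    let ?VD = "insert m (V - M)"
    let ?HV = "(\<lambda>v. if v = m then M else {v})"
    let ?HA = "(\<lambda>v. if v = m then A \<inter> M \<times> M else {})"
    have VDV: "?VD \<subseteq> V" using MV m by auto
    have "card ?VD = Suc (card (V - M))" using m fin by simp
    moreover have "card (V - M) = card V - card M" using card_Diff_subset[OF finM MV] .
    moreover have "card M \<le> card V" using card_mono[OF fin MV] .
    ultimately have cVD: "card ?VD < card V" using M(2) by linarith
    have cM: "card M < card V" using psubset_card_mono[OF fin] MV M(3) by blast
    have cD: "classW ?VD (A \<inter> ?VD \<times> ?VD)"
      using less.hyps[OF cVD induced_digraph[OF dg VDV] induced_wqt[OF W VDV]] .
    have cMW: "classW M (A \<inter> M \<times> M)"
      using less.hyps[OF cM induced_digraph[OF dg MV] induced_wqt[OF W MV]] .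
    have cH: "classW (?HV v) (?HA v)" if "v \<in> ?VD" for v
      using cMW classW_single by (cases "v = m") auto
    have ne: "?HV v \<noteq> {}" if "v \<in> ?VD" for v using m by auto
    have disj: "?HV v \<inter> ?HV w = {}" if "v \<in> ?VD" "w \<in> ?VD" "v \<noteq> w" for v w
      using that by auto
    have "classW (subst_vertices ?VD ?HV) (subst_arcs ?VD (A \<inter> ?VD \<times> ?VD) ?HV ?HA)"
      by (rule classW.subst[OF cD cH ne disj])
    then show ?thesis using module_decomp[OF dg M(1) m] by simp
  next
    case False
    then have nomod: "M = V" if "module V A M" "2 \<le> card M" for M using that by blast
    show ?thesis
    proof (cases "\<exists>u. (u, u) \<in> A\<^sup>+")
      case True
      then obtain u where "(u, u) \<in> A\<^sup>+" by blast
      then obtain S where S: "S \<subseteq> V" "2 \<le> card S" "PiS A S" using seedS[OF dg W] by blast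
      let ?F = "{M. S \<subseteq> M \<and> M \<subseteq> V \<and> PiS A M}"
      have subP: "?F \<subseteq> Pow V" by auto
      have finP: "finite (Pow V)" using fin by simp
      have finF: "finite ?F" using finite_subset[OF subP finP] .
      have "S \<in> ?F" using S by auto
      then have "?F \<noteq> {}" by blast
      from finite_has_maximal[OF finF this] obtain M where MF: "M \<in> ?F"
        and mx0: "\<forall>M'\<in>?F. M \<le> M' \<longrightarrow> M = M'" by (elim bexE)
      have mx: "M = M'" if "M' \<in> ?F" "M \<subseteq> M'" for M' using mx0 that by blast
      have MV: "M \<subseteq> V" and SM: "S \<subseteq> M" and PM: "PiS A M" using MF by auto
      have "M = V"
      proof (rule ccontr)
        assume nV: "M \<noteq> V"
        have "card S \<le> card M" using card_mono[OF finite_subset[OF MV fin] SM] .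
        then have "2 \<le> card M" using S(2) by simp
        then have "\<not> module V A M" using nomod nV by blast
        then obtain x m1 m2 where x: "x \<in> V" "x \<notin> M" and mm: "m1 \<in> M" "m2 \<in> M"
          and kd: "kind A x m1 \<noteq> kind A x m2"
          using MV unfolding module_def by blast
        have "PiS A (insert x M)" using grow[OF dg W MV PM x mm kd] .
        then have "insert x M \<in> ?F" using SM MV x by auto
        then have "M = insert x M" using mx by blast
        then show False using x by blast
      qed
      then have PV: "PiS A V" using PM by simp
      then have "\<not> conn (nadj A V) V \<or> \<not> conn (nrel A V) V" unfolding PiS_def by simp
      then show ?thesis
      proof
        assume nc: "\<not> conn (nadj A V) V"
        have "semicomplete V A" unfolding semicomplete_def
        proof (intro ballI impI)
          fix u w assume u: "u \<in> V" and w: "w \<in> V" and uw: "u \<noteq> w"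
          show "adjacent A u w"
          proof (rule ccontr)
            assume na: "\<not> adjacent A u w"
            let ?K = "{y \<in> V. (u, y) \<in> (nadj A V)\<^sup>*}"
            have mod: "module V A ?K" using cocomp_module[OF W u] .
            have "(u, w) \<in> nadj A V" using u w uw na unfolding nadj_def by auto
            then have "w \<in> ?K" "u \<in> ?K" using w u by auto
            then have "card {u, w} \<le> card ?K" by (intro card_mono) (use fin in auto)
            then have "2 \<le> card ?K" using uw by simp
            then have "?K = V" using nomod mod by blast
            moreover obtain z where "z \<in> V" "(u, z) \<notin> (nadj A V)\<^sup>*"
              using comp_not_all[OF nc sym_nadj u] by blast
            ultimately show False by blast
          qed
        qed
        then show ?thesis using classW.semicompl[OF dg] by blast
      next
        assume nc: "\<not> conn (nrel A V) V"
        have "symmetric_digraph V A" unfolding symmetric_digraph_def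
        proof (intro allI impI)
          fix u w assume uwA: "(u, w) \<in> A"
          show "(w, u) \<in> A"
          proof (rule ccontr)
            assume na: "(w, u) \<notin> A"
            have u: "u \<in> V" and w: "w \<in> V" using uwA AV by auto
            have uw: "u \<noteq> w" using uwA nl by auto
            let ?K = "{y \<in> V. (u, y) \<in> (nrel A V)\<^sup>*}"
            have mod: "module V A ?K" using ncomp_module[OF W u] .
            have "(u, w) \<in> nrel A V" using u w uwA na unfolding nrel_def adjacent_def by auto
            then have "w \<in> ?K" "u \<in> ?K" using w u by auto
            then have "card {u, w} \<le> card ?K" by (intro card_mono) (use fin in auto)
            then have "2 \<le> card ?K" using uw by simp
            then have "?K = V" using nomod mod by blast
            moreover obtain z where "z \<in> V" "(u, z) \<notin> (nrel A V)\<^sup>*"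
              using comp_not_all[OF nc sym_nrel u] by blast
            ultimately show False by blast
          qed
        qed
        then show ?thesis using classW.symm[OF dg] by blast
      qed
    next
      case False
      then have "transitive_oriented V A" using acyc_trans[OF dg W] by blast
      then show ?thesis using classW.trans_or[OF dg] by blast
    qed
  qed
qed

theorem theorem3p2:
  fixes V :: "'a set" and A :: "('a \<times> 'a) set"
  shows "classW V A \<longleftrightarrow> digraph V A \<and> weakly_quasi_transitive V A"
  using classW_sound complete by blast


end
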